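(* Let $\mathcal{G}$ and $\mathcal{G}'$ be abstract GKM graphs of types $(r,n)$ and $(r,n')$ for the same compact torus $T$ of rank $r$. Then $H_T^*(\mathcal{G})$ and $H_T^*(\mathcal{G}')$ are isomorphic as $H^*(BT)$-algebras if and only if $\mathcal{G}$ and $\mathcal{G}'$ are isomorphic as GKM graphs.
   Context: Let $T$ be a compact torus of rank $r$, so $H^*(BT)=\mathbb{Z}[x_1,\dots,x_r]$ with $\deg x_i=2$. An abstract GKM graph of type $(r,n)$ is a finite $n$-valent undirected graph (multi-edges allowed, no loops) with vertex set $\mathcal{V}$ and set of directed edges $\mathcal{E}$, together with an axial function $\alpha\colon\mathcal{E}\to H^2(BT)$ satisfying: $\alpha(\overline{e})=\pm\alpha(e)$ (where $\overline{e}$ is $e$ reversed); $\alpha(e),\alpha(e')$ are linearly independent over $\mathbb{Z}$ whenever $e\neq e'$ have the same initial vertex; and the coefficients of each $\alpha(e)$ have gcd $1$. Moreover it must admit a parallel transport: a family of bijections $\mathcal{P}_e\colon\mathcal{E}_{i(e)}\to\mathcal{E}_{t(e)}$ (where $\mathcal{E}_p$ denotes the directed edges with initial point $p$, and $i(e),t(e)$ the initial and terminal points of $e$) with $\mathcal{P}_{\overline{e}}=\mathcal{P}_e^{-1}$, $\mathcal{P}_e(e)=\overline{e}$, and $\alpha(\mathcal{P}_e(e'))-\alpha(e')\in\mathbb{Z}\,\alpha(e)$. The graph equivariant cohomology is $H_T^*(\mathcal{G})=\{f\colon\mathcal{V}\to H^*(BT)\mid \alpha(e)\text{ divides } f(i(e))-f(t(e))\text{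 for all }e\in\mathcal{E}\}$, a graded $H^*(BT)$-subalgebra of all functions $\mathcal{V}\to H^*(BT)$. For distinct vertices $p,q$ let $P_{pq}=\prod_{e\in\mathcal{E}_{pq}}\alpha(e)$, where $\mathcal{E}_{pq}$ is the set of directed edges from $p$ to $q$. An isomorphism $\mathcal{G}'\to\mathcal{G}$ of GKM graphs is a bijection $\varphi_{\mathcal{V}}\colon\mathcal{V}'\to\mathcal{V}$ with $P_{\varphi_{\mathcal{V}}(p')\varphi_{\mathcal{V}}(q')}=\pm P_{p'q'}$ for all vertices $p',q'$ of $\mathcal{G}'$. *)

theory Defs
  imports Main "HOL-Library.Poly_Mapping"
begin

text \<open>H^*(BT) = Z[x_i | i in 'r], 'r a finite index type with CARD('r) = r (rank of T).
  Polynomials are finitely supported maps from monomials (exponent vectors) to integer coefficients.\<close>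
type_synonym 'r pol = "('r \<Rightarrow>\<^sub>0 nat) \<Rightarrow>\<^sub>0 int"

definition lin :: "('r::finite \<Rightarrow> int) \<Rightarrow> 'r pol" where
  "lin a = (\<Sum>i\<in>UNIV. Poly_Mapping.single (Poly_Mapping.single i 1) (a i))"

definition out_edges :: "'e set \<Rightarrow> ('e \<Rightarrow> 'v) \<Rightarrow> 'v \<Rightarrow> 'e set" where
  "out_edges E src p = {e \<in> E. src e = p}"

text \<open>Abstract GKM graph of type (r,n): vertex set V, directed edge set E, initial/terminal
  point maps src/tgt, reversal rv (e bar), axial function alpha given by integer coefficient
  vectors in H^2(BT) = Z^r.\<close>
definition gkm_graph ::
  "nat \<Rightarrow> 'v set \<Rightarrow> 'e set \<Rightarrow> ('e \<Rightarrow> 'v) \<Rightarrow> ('e \<Rightarrow> 'v) \<Rightarrow> ('e \<Rightarrow> 'e)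
    \<Rightarrow> ('e \<Rightarrow> ('r::finite \<Rightarrow> int)) \<Rightarrow> bool" where
  "gkm_graph n V E src tgt rv \<alpha> \<longleftrightarrow>
     finite V \<and> finite E \<and>
     (\<forall>e\<in>E. src e \<in> V \<and> tgt e \<in> V \<and> src e \<noteq> tgt e \<and>
              rv e \<in> E \<and> rv e \<noteq> e \<and> rv (rv e) = e \<and>
              src (rv e) = tgt e \<and> tgt (rv e) = src e) \<and>
     (\<forall>p\<in>V. card (out_edges E src p) = n) \<and>
     (\<forall>e\<in>E. \<alpha> (rv e) = \<alpha> e \<or> \<alpha> (rv e) = - \<alpha> e) \<and>
     (\<forall>e\<in>E. \<forall>e'\<in>E. e \<noteq> e' \<and> src e = src e' \<longrightarrow>
        (\<forall>a b :: int. (\<forall>i. a * \<alpha> e i + b * \<alpha> e' i = 0) \<longrightarrow> a = 0 \<and> b = 0)) \<and>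
     (\<forall>e\<in>E. Gcd (range (\<alpha> e)) = 1) \<and>
     (\<exists>P :: 'e \<Rightarrow> 'e \<Rightarrow> 'e.
        \<forall>e\<in>E. bij_betw (P e) (out_edges E src (src e)) (out_edges E src (tgt e)) \<and>
              (\<forall>e'\<in>out_edges E src (src e). P (rv e) (P e e') = e') \<and>
              P e e = rv e \<and>
              (\<forall>e'\<in>out_edges E src (src e). \<exists>k::int. (\<forall>i. \<alpha> (P e e') i - \<alpha> e' i = k * \<alpha> e i)))"

text \<open>Graph equivariant cohomology H_T^*(G): functions V -> H^*(BT) (extended by 0 outside V)
  satisfying the GKM divisibility conditions.\<close>
definition gkm_cohom ::
  "'v set \<Rightarrow> 'e set \<Rightarrow> ('e \<Rightarrow> 'v) \<Rightarrow> ('e \<Rightarrow> 'v) \<Rightarrow> ('e \<Rightarrow> ('r::finite \<Rightarrow> int))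
    \<Rightarrow> ('v \<Rightarrow> 'r pol) set" where
  "gkm_cohom V E src tgt \<alpha> =
     {f. (\<forall>v. v \<notin> V \<longrightarrow> f v = 0) \<and>
         (\<forall>e\<in>E. lin (\<alpha> e) dvd f (src e) - f (tgt e))}"

definition one_on :: "'v set \<Rightarrow> 'v \<Rightarrow> 'r pol" where
  "one_on V = (\<lambda>v. if v \<in> V then 1 else 0)"

definition alg_iso ::
  "'v set \<Rightarrow> ('v \<Rightarrow> 'r pol) set \<Rightarrow> 'w set \<Rightarrow> ('w \<Rightarrow> 'r pol) set
    \<Rightarrow> (('v \<Rightarrow> 'r pol) \<Rightarrow> ('w \<Rightarrow> 'r pol)) \<Rightarrow> bool" where
  "alg_iso V A W B \<Phi> \<longleftrightarrow>
     bij_betw \<Phi> A B \<and>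
     (\<forall>f\<in>A. \<forall>g\<in>A. \<Phi> (\<lambda>v. f v + g v) = (\<lambda>w. \<Phi> f w + \<Phi> g w)) \<and>
     (\<forall>f\<in>A. \<forall>g\<in>A. \<Phi> (\<lambda>v. f v * g v) = (\<lambda>w. \<Phi> f w * \<Phi> g w)) \<and>
     (\<forall>c. \<forall>f\<in>A. \<Phi> (\<lambda>v. c * f v) = (\<lambda>w. c * \<Phi> f w)) \<and>
     \<Phi> (one_on V) = one_on W"

definition P_prod ::
  "'e set \<Rightarrow> ('e \<Rightarrow> 'v) \<Rightarrow> ('e \<Rightarrow> 'v) \<Rightarrow> ('e \<Rightarrow> ('r::finite \<Rightarrow> int)) \<Rightarrow> 'v \<Rightarrow> 'v \<Rightarrow> 'r pol" where
  "P_prod E src tgt \<alpha> p q = (\<Prod>e\<in>{e \<in> E. src e = p \<and> tgt e = q}. lin (\<alpha> e))"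

definition gkm_iso ::
  "'w set \<Rightarrow> 'f set \<Rightarrow> ('f \<Rightarrow> 'w) \<Rightarrow> ('f \<Rightarrow> 'w) \<Rightarrow> ('f \<Rightarrow> ('r::finite \<Rightarrow> int)) \<Rightarrow>
   'v set \<Rightarrow> 'e set \<Rightarrow> ('e \<Rightarrow> 'v) \<Rightarrow> ('e \<Rightarrow> 'v) \<Rightarrow> ('e \<Rightarrow> ('r \<Rightarrow> int)) \<Rightarrow>
   ('w \<Rightarrow> 'v) \<Rightarrow> bool" where
  "gkm_iso V' E' src' tgt' \<alpha>' V E src tgt \<alpha> \<phi> \<longleftrightarrow>
     bij_betw \<phi> V' V \<and>
     (\<forall>p\<in>V'. \<forall>q\<in>V'. p \<noteq> q \<longrightarrow>
        P_prod E src tgt \<alpha> (\<phi> p) (\<phi> q) = P_prod E' src' tgt' \<alpha>' p q \<or>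
        P_prod E src tgt \<alpha> (\<phi> p) (\<phi> q) = - P_prod E' src' tgt' \<alpha>' p q)"

end

theory Submission
  imports Defs "HOL-Computational_Algebra.Polynomial"
begin


abbreviation lk where "lk \<equiv> Poly_Mapping.lookup"
abbreviation ks where "ks \<equiv> Poly_Mapping.keys"
abbreviation sg where "sg \<equiv> Poly_Mapping.single"

definition mnm :: "('r::finite \<Rightarrow> 'b::comm_ring_1) \<Rightarrow> ('r \<Rightarrow>\<^sub>0 nat) \<Rightarrow> 'b" where
  "mnm \<sigma> m = (\<Prod>i\<in>UNIV. \<sigma> i ^ lk m i)"

definition sbs :: "('r::finite \<Rightarrow> 'b::comm_ring_1) \<Rightarrow> 'r pol \<Rightarrow> 'b" where
  "sbs \<sigma> g = (\<Sum>m\<in>ks g. of_int (lk g m) * mnm \<sigma> m)"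

lemma mnm_add: "mnm \<sigma> (m + m') = mnm \<sigma> m * mnm \<sigma> m'"
  by (simp add: mnm_def lookup_add power_add prod.distrib)

lemma mnm_zero [simp]: "mnm \<sigma> 0 = 1"
  by (simp add: mnm_def)

lemma sbs_superset:
  assumes "finite S" "ks g \<subseteq> S"
  shows "sbs \<sigma> g = (\<Sum>m\<in>S. of_int (lk g m) * mnm \<sigma> m)"
  unfolding sbs_def
  by (rule sum.mono_neutral_left[OF assms(1,2)]) (auto simp: in_keys_iff)

lemma sbs_add: "sbs \<sigma> (g + h) = sbs \<sigma> g + sbs \<sigma> h"
proof -
  let ?S = "ks g \<union> ks h"
  have "ks (g + h) \<subseteq> ?S" by (rule keys_add)
  then have "sbs \<sigma> (g + h) = (\<Sum>m\<in>?S. of_int (lk (g+h) m) * mnm \<sigma> m)"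
    by (intro sbs_superset) auto
  also have "\<dots> = (\<Sum>m\<in>?S. of_int (lk g m) * mnm \<sigma> m) + (\<Sum>m\<in>?S. of_int (lk h m) * mnm \<sigma> m)"
    by (simp add: lookup_add distrib_right sum.distrib)
  also have "\<dots> = sbs \<sigma> g + sbs \<sigma> h"
    by (simp add: sbs_superset[of ?S g] sbs_superset[of ?S h])
  finally show ?thesis .
qed

lemma sbs_zero [simp]: "sbs \<sigma> 0 = 0"
  by (simp add: sbs_def)

lemma sbs_uminus: "sbs \<sigma> (- g) = - sbs \<sigma> g"
  by (metis minus_unique sbs_add add.right_inverse sbs_zero)

lemma sbs_diff: "sbs \<sigma> (g - h) = sbs \<sigma> g - sbs \<sigma> h"
  using sbs_add[of \<sigma> g "-h"] by (simp add: sbs_uminus)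

lemma sbs_sum: "sbs \<sigma> (\<Sum>x\<in>A. f x) = (\<Sum>x\<in>A. sbs \<sigma> (f x))"
  by (induction A rule: infinite_finite_induct) (auto simp: sbs_add)

lemma sbs_single: "sbs \<sigma> (sg m c) = of_int c * mnm \<sigma> m"
  by (cases "c = 0") (auto simp: sbs_def)

lemma pol_sum_singles:
  assumes "finite S" "ks g \<subseteq> S"
  shows "g = (\<Sum>m\<in>S. sg m (lk g m))"
proof (rule poly_mapping_eqI)
  fix k
  have "lk (\<Sum>m\<in>S. sg m (lk g m)) k = (\<Sum>m\<in>S. lk g m when m = k)"
    by (simp add: lookup_sum lookup_single)
  also have "\<dots> = lk g k"
    using assms by (cases "k \<in> S") (auto simp: when_def in_keys_iff)
  finally show "lk g k = lk (\<Sum>m\<in>S. sg m (lk g m)) k" by simp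
qed

lemma sbs_mult: "sbs \<sigma> (g * h) = sbs \<sigma> g * sbs \<sigma> h"
proof -
  have g: "g = (\<Sum>m\<in>ks g. sg m (lk g m))"
    by (rule pol_sum_singles) auto
  have h: "h = (\<Sum>m\<in>ks h. sg m (lk h m))"
    by (rule pol_sum_singles) auto
  have "g * h = (\<Sum>m\<in>ks g. sg m (lk g m)) * (\<Sum>m'\<in>ks h. sg m' (lk h m'))"
    using g h by simp
  also have "\<dots> = (\<Sum>m\<in>ks g. \<Sum>m'\<in>ks h. sg m (lk g m) * sg m' (lk h m'))"
    by (rule sum_product)
  finally have gh: "g * h = (\<Sum>m\<in>ks g. \<Sum>m'\<in>ks h. sg (m + m') (lk g m * lk h m'))"
    by (simp only: mult_single)
  have "sbs \<sigma> (g * h) = (\<Sum>m\<in>ks g. \<Sum>m'\<in>ks h. sbs \<sigma> (sg (m + m') (lk g m * lk h m')))"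
    unfolding gh by (simp only: sbs_sum)
  also have "\<dots> = (\<Sum>m\<in>ks g. \<Sum>m'\<in>ks h. (of_int (lk g m) * mnm \<sigma> m) * (of_int (lk h m') * mnm \<sigma> m'))"
    by (intro sum.cong refl) (simp add: sbs_single mnm_add mult_ac)
  also have "\<dots> = sbs \<sigma> g * sbs \<sigma> h"
    unfolding sbs_def by (rule sum_product[symmetric])
  finally show ?thesis .
qed

lemma sbs_one [simp]: "sbs \<sigma> 1 = 1"
  using sbs_single[of \<sigma> 0 1] by simp

lemma sbs_prod: "sbs \<sigma> (\<Prod>x\<in>A. f x) = (\<Prod>x\<in>A. sbs \<sigma> (f x))"
  by (induction A rule: infinite_finite_induct) (auto simp: sbs_mult)

lemma sbs_power: "sbs \<sigma> (g ^ k) = sbs \<sigma> g ^ k"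
  by (induction k) (auto simp: sbs_mult)

lemma sbs_dvd: "a dvd b \<Longrightarrow> sbs \<sigma> a dvd sbs \<sigma> b"
  by (auto simp: sbs_mult)

definition Xv :: "'r::finite \<Rightarrow> 'r pol" where
  "Xv i = sg (sg i 1) 1"

lemma X_power: "Xv i ^ n = sg (sg i n) 1"
proof (induction n)
  case 0
  then show ?case by (simp add: Xv_def)
next
  case (Suc n)
  have "sg i (Suc n) = sg i n + sg i 1"
    by (simp flip: single_add)
  then show ?case using Suc by (simp add: Xv_def mult_single mult.commute)
qed

lemma prod_singles: "(\<Prod>i\<in>A. sg (sg i (f i)) (1::int)) = sg (\<Sum>i\<in>A. sg i (f i)) 1"
  by (induction A rule: infinite_finite_induct) (auto simp: mult_single)

lemma sum_singles_key: "(\<Sum>i\<in>(UNIV::'r::finite set). sg i (lk m i)) = m"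
proof (rule poly_mapping_eqI)
  fix k
  have "lk (\<Sum>i\<in>(UNIV::'r set). sg i (lk m i)) k = (\<Sum>i\<in>UNIV. lk m i when i = k)"
    by (simp add: lookup_sum lookup_single)
  also have "\<dots> = lk m k"
    by (simp add: when_def)
  finally show "lk (\<Sum>i\<in>(UNIV::'r set). sg i (lk m i)) k = lk m k" .
qed

lemma mnm_X: "mnm Xv m = sg m 1"
  by (simp add: mnm_def X_power prod_singles sum_singles_key)

lemma of_int_pol: "(of_int c :: 'r pol) = sg 0 c"
  by (metis single_of_int of_int_eq_id id_apply)

lemma sbs_of_int [simp]: "sbs \<sigma> (of_int c) = of_int c"
  by (simp only: of_int_pol sbs_single mnm_zero) simp

lemma sbs_X_id: "sbs Xv g = (g::'r::finite pol)"
proof -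
  have "sbs Xv g = (\<Sum>m\<in>ks g. sg m (lk g m))"
    unfolding sbs_def mnm_X
    by (intro sum.cong refl) (simp add: of_int_pol mult_single)
  also have "\<dots> = g"
    by (rule pol_sum_singles[symmetric]) auto
  finally show ?thesis .
qed

lemma sbs_X [simp]: "sbs \<sigma> (Xv i) = \<sigma> i"
proof -
  have "mnm \<sigma> (sg i 1) = \<sigma> i"
  proof -
    have "mnm \<sigma> (sg i 1) = (\<Prod>j\<in>UNIV. if j = i then \<sigma> i else 1)"
      unfolding mnm_def by (intro prod.cong refl) (auto simp: lookup_single when_def)
    then show ?thesis by simp
  qed
  then show ?thesis by (simp add: Xv_def sbs_single)
qed

lemma mnm_sbs: "sbs \<sigma> (mnm \<tau> m) = mnm (\<lambda>i. sbs \<sigma> (\<tau> i)) m"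
  by (simp add: mnm_def sbs_prod sbs_power)

lemma sbs_sbs: "sbs \<sigma> (sbs \<tau> g) = sbs (\<lambda>i. sbs \<sigma> (\<tau> i)) (g::'r::finite pol)"
proof -
  have "sbs \<sigma> (sbs \<tau> g) = (\<Sum>m\<in>ks g. of_int (lk g m) * mnm (\<lambda>i. sbs \<sigma> (\<tau> i)) m)"
    by (simp only: sbs_def[of \<tau> g] sbs_sum sbs_mult sbs_of_int mnm_sbs)
  then show ?thesis by (simp only: sbs_def[of "\<lambda>i. sbs \<sigma> (\<tau> i)" g])
qed

lemma lin_sum: "lin a = (\<Sum>i\<in>UNIV. of_int (a i) * Xv i)"
  unfolding lin_def Xv_def by (intro sum.cong refl) (simp add: of_int_pol mult_single)

lemma sbs_lin: "sbs \<sigma> (lin a) = (\<Sum>i\<in>UNIV. of_int (a i) * \<sigma> i)"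
  by (simp add: lin_sum sbs_sum sbs_mult)

lemma dvd_diff_mult:
  fixes d :: "'a::comm_ring_1"
  assumes "d dvd x - y" "d dvd x' - y'"
  shows "d dvd x * x' - y * y'"
proof -
  have "x * x' - y * y' = x * (x' - y') + (x - y) * y'" by (simp add: algebra_simps)
  then show ?thesis using assms by simp
qed

lemma dvd_diff_power:
  fixes d :: "'a::comm_ring_1"
  assumes "d dvd x - y"
  shows "d dvd x ^ n - y ^ n"
  by (induction n) (auto intro: dvd_diff_mult assms)

lemma dvd_diff_prod:
  fixes d :: "'a::comm_ring_1"
  assumes "\<And>i. i \<in> A \<Longrightarrow> d dvd f i - g i"
  shows "d dvd (\<Prod>i\<in>A. f i) - (\<Prod>i\<in>A. g i)"
  using assms by (induction A rule: infinite_finite_induct) (auto intro: dvd_diff_mult)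

lemma sbs_cong:
  fixes d :: "'b::comm_ring_1"
  assumes "\<And>i. d dvd \<tau> i - \<sigma> i"
  shows "d dvd sbs \<tau> g - sbs \<sigma> g"
proof -
  have "sbs \<tau> g - sbs \<sigma> g = (\<Sum>m\<in>ks g. of_int (lk g m) * (mnm \<tau> m - mnm \<sigma> m))"
    by (simp add: sbs_def algebra_simps sum_subtractf)
  moreover have "d dvd mnm \<tau> m - mnm \<sigma> m" for m
    unfolding mnm_def by (rule dvd_diff_prod) (intro dvd_diff_power assms)
  ultimately show ?thesis by (simp add: dvd_sum)
qed

lemma single_power_gen: "sg (sg j (1::nat)) (1::int) ^ n = sg (sg j n) 1"
proof (induction n)
  case 0
  then show ?case by simp
next
  case (Suc n)
  have "sg j (Suc n) = sg j n + sg j 1"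
    by (simp flip: single_add)
  then show ?case using Suc by (simp add: mult_single mult.commute)
qed

lemma prod_singles_gen: "(\<Prod>i\<in>A. sg (k i) (1::int)) = sg (\<Sum>i\<in>A. (k i :: 'b::comm_monoid_add)) 1"
  by (induction A rule: infinite_finite_induct) (auto simp: mult_single)

definition Kmap :: "('r::finite \<Rightarrow> nat) \<Rightarrow> 'r \<Rightarrow> (nat \<Rightarrow>\<^sub>0 nat) \<Rightarrow>\<^sub>0 int" where
  "Kmap enc i = sg (sg (enc i) 1) 1"

definition Ekey :: "('r::finite \<Rightarrow> nat) \<Rightarrow> ('r \<Rightarrow>\<^sub>0 nat) \<Rightarrow> (nat \<Rightarrow>\<^sub>0 nat)" where
  "Ekey enc m = (\<Sum>i\<in>UNIV. sg (enc i) (lk m i))"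

lemma mnm_Kmap: "mnm (Kmap enc) m = sg (Ekey enc m) 1"
  unfolding mnm_def Kmap_def single_power_gen prod_singles_gen Ekey_def by (rule refl)

lemma lookup_Ekey:
  assumes "inj enc"
  shows "lk (Ekey enc m) (enc j) = lk m j"
proof -
  have "lk (Ekey enc m) (enc j) = (\<Sum>i\<in>UNIV. lk m i when enc i = enc j)"
    by (simp add: Ekey_def lookup_sum lookup_single)
  also have "\<dots> = (\<Sum>i\<in>UNIV. lk m i when i = j)"
    using assms by (intro sum.cong refl) (auto simp: when_def inj_eq)
  also have "\<dots> = lk m j" by (simp add: when_def)
  finally show ?thesis .
qed

lemma inj_Ekey:
  assumes "inj enc"
  shows "inj (Ekey enc)"
proof (rule injI)
  fix m m' assume "Ekey enc m = Ekey enc m'"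
  then have "lk m j = lk m' j" for j
    using lookup_Ekey[OF assms] by metis
  then show "m = m'" by (rule poly_mapping_eqI)
qed

lemma lookup_sbs_Kmap:
  assumes "inj enc"
  shows "lk (sbs (Kmap enc) g) (Ekey enc m) = lk g m"
proof -
  have "sbs (Kmap enc) g = (\<Sum>m'\<in>ks g. sg (Ekey enc m') (lk g m'))"
    unfolding sbs_def mnm_Kmap
    by (intro sum.cong refl) (metis mult.right_neutral mult_single of_int_eq_id id_apply single_of_int add_0)
  then have "lk (sbs (Kmap enc) g) (Ekey enc m) = (\<Sum>m'\<in>ks g. lk g m' when m' = m)"
    using inj_Ekey[OF assms] by (simp add: lookup_sum lookup_single when_def inj_eq)
  also have "\<dots> = lk g m"
    by (cases "m \<in> ks g") (auto simp: when_def in_keys_iff)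
  finally show ?thesis .
qed

lemma pol_no_zero_div:
  fixes g h :: "'r::finite pol"
  assumes "g * h = 0"
  shows "g = 0 \<or> h = 0"
proof -
  obtain enc :: "'r \<Rightarrow> nat" where enc: "inj enc"
    using finite_imp_inj_to_nat_seg[of "UNIV::'r set"] by auto
  have "sbs (Kmap enc) g * sbs (Kmap enc) h = 0"
    using assms by (metis sbs_mult sbs_zero)
  then have "sbs (Kmap enc) g = 0 \<or> sbs (Kmap enc) h = 0" by simp
  then show ?thesis
  proof
    assume "sbs (Kmap enc) g = 0"
    then have "lk g m = 0" for m using lookup_sbs_Kmap[OF enc, of g m] by simp
    then show ?thesis by (auto intro: poly_mapping_eqI)
  next
    assume "sbs (Kmap enc) h = 0"
    then have "lk h m = 0" for m using lookup_sbs_Kmap[OF enc, of h m] by simp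
    then show ?thesis by (auto intro: poly_mapping_eqI)
  qed
qed

lemma pol_mult_eq_0_iff [simp]: "(g::'r::finite pol) * h = 0 \<longleftrightarrow> g = 0 \<or> h = 0"
  using pol_no_zero_div by auto

lemma pol_mult_cancel:
  fixes a b c :: "'r::finite pol"
  assumes "a * b = a * c" "a \<noteq> 0"
  shows "b = c"
proof -
  have "a * (b - c) = 0" using assms(1) by (simp add: algebra_simps)
  then show ?thesis using assms(2) by simp
qed

definition prm :: "'a::comm_ring_1 \<Rightarrow> bool" where
  "prm p \<longleftrightarrow> \<not> p dvd 1 \<and> (\<forall>g h. p dvd g * h \<longrightarrow> p dvd g \<or> p dvd h)"

definition prim :: "('r \<Rightarrow> int) \<Rightarrow> bool" where
  "prim a \<longleftrightarrow> (\<forall>d::int. (\<forall>i. d dvd a i) \<longrightarrow> d dvd 1)"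

lemma lin_add: "lin (\<lambda>l. a l + b l) = lin a + lin b"
  by (simp add: lin_sum sum.distrib algebra_simps)

lemma lin_uminus: "lin (\<lambda>l. - a l) = - lin a"
  by (simp add: lin_sum sum_negf)

lemma lin_delta: "lin (\<lambda>l. if l = i then c else 0) = of_int c * Xv i"
proof -
  have "lin (\<lambda>l. if l = i then c else 0) = (\<Sum>l\<in>UNIV. if l = i then of_int c * Xv i else 0)"
    unfolding lin_sum by (intro sum.cong refl) auto
  then show ?thesis by simp
qed

lemma sum_upd_diff:
  fixes \<tau> :: "'r::finite \<Rightarrow> 'b::comm_ring_1"
  shows "(\<Sum>l\<in>UNIV. of_int (c l) * (\<tau>(j := t)) l) = (\<Sum>l\<in>UNIV. of_int (c l) * \<tau> l) + of_int (c j) * (t - \<tau> j)"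
proof -
  have "(\<Sum>l\<in>UNIV. of_int (c l) * (\<tau>(j := t)) l) - (\<Sum>l\<in>UNIV. of_int (c l) * \<tau> l)
     = (\<Sum>l\<in>UNIV. of_int (c l) * (\<tau>(j := t)) l - of_int (c l) * \<tau> l)"
    by (simp only: sum_subtractf)
  also have "\<dots> = (\<Sum>l\<in>UNIV. if l = j then of_int (c j) * (t - \<tau> j) else 0)"
    by (intro sum.cong refl) (auto simp: algebra_simps)
  also have "\<dots> = of_int (c j) * (t - \<tau> j)" by simp
  finally have "(\<Sum>l\<in>UNIV. of_int (c l) * (\<tau>(j := t)) l) - (\<Sum>l\<in>UNIV. of_int (c l) * \<tau> l) = of_int (c j) * (t - \<tau> j)" .
  then show ?thesis by (simp add: algebra_simps)
qed

lemma prm_lin_unit: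
  fixes a :: "'r::finite \<Rightarrow> int"
  assumes "a j = 1"
  shows "prm (lin a)"
proof -
  define t where "t = - (lin a - Xv j)"
  define \<sigma> where "\<sigma> = Xv(j := t)"
  have s0: "sbs \<sigma> (lin a) = 0"
    unfolding sbs_lin \<sigma>_def sum_upd_diff using assms by (simp add: t_def lin_sum)
  have cong: "lin a dvd g - sbs \<sigma> g" for g
  proof -
    have "lin a dvd Xv i - \<sigma> i" for i
      by (cases "i = j") (auto simp: \<sigma>_def t_def)
    then have "lin a dvd sbs Xv g - sbs \<sigma> g" by (intro sbs_cong)
    then show ?thesis by (simp add: sbs_X_id)
  qed
  have ker: "lin a dvd g \<longleftrightarrow> sbs \<sigma> g = 0" for g
  proof
    assume "lin a dvd g"
    then obtain k where "g = lin a * k" by (auto elim: dvdE)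
    then show "sbs \<sigma> g = 0" by (simp add: sbs_mult s0)
  next
    assume "sbs \<sigma> g = 0"
    then show "lin a dvd g" using cong[of g] by simp
  qed
  show ?thesis
    unfolding prm_def
  proof (intro conjI allI impI)
    show "\<not> lin a dvd 1"
    proof
      assume "lin a dvd 1"
      then have "sbs \<sigma> (1::'r pol) = 0" using ker by blast
      then show False by simp
    qed
  next
    fix g h assume "lin a dvd g * h"
    then have "sbs \<sigma> g * sbs \<sigma> h = 0" using ker by (simp add: sbs_mult)
    then show "lin a dvd g \<or> lin a dvd h" using ker by simp
  qed
qed

lemma prm_uminus: "prm (- p) \<longleftrightarrow> prm p"
  by (simp add: prm_def)

lemma prm_transfer:
  fixes \<sigma> \<sigma>' :: "'r::finite \<Rightarrow> 'r pol"
  assumes inv: "\<And>g. sbs \<sigma>' (sbs \<sigma> g) = g"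
    and pr: "prm (sbs \<sigma> p)"
  shows "prm p"
  unfolding prm_def
proof (intro conjI allI impI)
  show "\<not> p dvd 1"
  proof
    assume "p dvd 1"
    then have "sbs \<sigma> p dvd 1" using sbs_dvd[of p 1 \<sigma>] by simp
    then show False using pr by (simp add: prm_def)
  qed
next
  fix g h assume "p dvd g * h"
  then have "sbs \<sigma> p dvd sbs \<sigma> g * sbs \<sigma> h" using sbs_dvd[of p "g*h" \<sigma>] by (simp add: sbs_mult)
  then have "sbs \<sigma> p dvd sbs \<sigma> g \<or> sbs \<sigma> p dvd sbs \<sigma> h" using pr by (simp add: prm_def)
  then show "p dvd g \<or> p dvd h"
    by (metis inv sbs_dvd)
qed

lemma elem_subst:
  fixes a :: "'r::finite \<Rightarrow> int"
  assumes "i \<noteq> j"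
  shows "sbs (Xv(j := Xv j + of_int k * Xv i)) (lin a) = lin (a(i := a i + k * a j))"
proof -
  have "a(i := a i + k * a j) = (\<lambda>l. a l + (\<lambda>l. if l = i then k * a j else 0) l)"
    by (auto simp: fun_eq_iff)
  then have "lin (a(i := a i + k * a j)) = lin a + of_int (k * a j) * Xv i"
    by (simp add: lin_add lin_delta)
  moreover have "sbs (Xv(j := Xv j + of_int k * Xv i)) (lin a) = lin a + of_int (a j) * (of_int k * Xv i)"
    unfolding sbs_lin sum_upd_diff by (simp add: lin_sum)
  ultimately show ?thesis by (simp add: algebra_simps)
qed

lemma elem_inv:
  fixes g :: "'r::finite pol"
  assumes "i \<noteq> j"
  shows "sbs (Xv(j := Xv j - of_int k * Xv i)) (sbs (Xv(j := Xv j + of_int k * Xv i)) g) = g"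
proof -
  have "(\<lambda>l. sbs (Xv(j := Xv j - of_int k * Xv i)) ((Xv(j := Xv j + of_int k * Xv i)) l)) = Xv"
    using assms by (auto simp: fun_eq_iff sbs_add sbs_mult)
  then show ?thesis by (simp add: sbs_sbs sbs_X_id)
qed

lemma prm_lin_prim:
  fixes a :: "'r::finite \<Rightarrow> int"
  assumes "prim a"
  shows "prm (lin a)"
  using assms
proof (induction "\<Sum>l\<in>UNIV. nat \<bar>a l\<bar>" arbitrary: a rule: less_induct)
  case less
  show ?case
  proof (cases "\<exists>j. a j = 1 \<or> a j = -1")
    case True
    then obtain j where "a j = 1 \<or> a j = -1" by blast
    then show ?thesis
    proof
      assume "a j = 1" then show ?thesis by (rule prm_lin_unit)
    next
      assume "a j = -1"
      then have "prm (lin (\<lambda>l. - a l))" by (intro prm_lin_unit[of "\<lambda>l. - a l" j]) simp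
      then show ?thesis by (simp add: lin_uminus prm_uminus)
    qed
  next
    case False
    have "\<exists>i. a i \<noteq> 0"
    proof (rule ccontr)
      assume "\<not> (\<exists>i. a i \<noteq> 0)"
      then have "\<forall>l. (2::int) dvd a l" by simp
      then have "(2::int) dvd 1" using less.prems unfolding prim_def by blast
      then show False by simp
    qed
    then obtain i where ai: "a i \<noteq> 0" by blast
    have "\<exists>j. j \<noteq> i \<and> a j \<noteq> 0"
    proof (rule ccontr)
      assume "\<not> ?thesis"
      then have "\<forall>l. a i dvd a l" by (metis dvd_0_right dvd_refl)
      then have "a i dvd 1" using less.prems unfolding prim_def by blast
      then show False using False by (auto simp: zdvd1_eq abs_if split: if_splits)
    qed
    then obtain j where ij: "j \<noteq> i" "a j \<noteq> 0" by blast
    obtain i0 j0 where ij0: "i0 \<noteq> j0" "a j0 \<noteq> 0" "\<bar>a j0\<bar> \<le> \<bar>a i0\<bar>"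
    proof (cases "\<bar>a j\<bar> \<le> \<bar>a i\<bar>")
      case True show ?thesis by (rule that[of i j]) (use ij True in auto)
    next
      case False show ?thesis by (rule that[of j i]) (use ij ai False in auto)
    qed
    have "\<bar>a i0 + 1 * a j0\<bar> < \<bar>a i0\<bar> \<or> \<bar>a i0 + (-1) * a j0\<bar> < \<bar>a i0\<bar>"
      using ij0(2,3) by arith
    then obtain k :: int where k: "k = 1 \<or> k = -1" "\<bar>a i0 + k * a j0\<bar> < \<bar>a i0\<bar>"
      by blast
    define a' where "a' = a(i0 := a i0 + k * a j0)"
    have prim': "prim a'"
      unfolding prim_def
    proof (intro allI impI)
      fix d :: int assume d: "\<forall>l. d dvd a' l"
      have "d dvd a l" for l
      proof (cases "l = i0")
        case True
        have "d dvd a' i0" "d dvd a' j0" using d by auto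
        then have "d dvd a' i0 - k * a' j0" by simp
        moreover have "a' i0 - k * a' j0 = a i0" using ij0(1) by (simp add: a'_def)
        ultimately show ?thesis using True by simp
      next
        case False
        then show ?thesis using d[rule_format, of l] by (simp add: a'_def)
      qed
      then show "d dvd 1" using less.prems unfolding prim_def by blast
    qed
    have "(\<Sum>l\<in>UNIV. nat \<bar>a' l\<bar>) < (\<Sum>l\<in>UNIV. nat \<bar>a l\<bar>)"
    proof (rule sum_strict_mono_ex1)
      show "\<forall>l\<in>UNIV. nat \<bar>a' l\<bar> \<le> nat \<bar>a l\<bar>" using k by (auto simp: a'_def)
      show "\<exists>l\<in>UNIV. nat \<bar>a' l\<bar> < nat \<bar>a l\<bar>" using k by (auto simp: a'_def intro!: bexI[of _ i0])
    qed simp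
    then have "prm (lin a')" by (rule less.hyps[OF _ prim'])
    then have "prm (sbs (Xv(j0 := Xv j0 + of_int k * Xv i0)) (lin a))"
      using elem_subst[OF ij0(1)] by (simp add: a'_def)
    then show ?thesis
      by (rule prm_transfer[rotated]) (rule elem_inv[OF ij0(1)])
  qed
qed

definition dlt :: "'r \<Rightarrow> 'r \<Rightarrow> int poly" where
  "dlt j l = (if l = j then [:0, 1:] else 0)"

lemma sbs_del_lin: "sbs (dlt j) (lin (a::'r::finite \<Rightarrow> int)) = [:0, a j:]"
proof -
  have "sbs (dlt j) (lin a) = (\<Sum>l\<in>UNIV. if l = j then of_int (a j) * [:0, 1:] else 0)"
    unfolding sbs_lin dlt_def by (intro sum.cong refl) auto
  also have "\<dots> = [:0, a j:]" by (simp add: of_int_poly)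
  finally show ?thesis .
qed

lemma coeff0_sbs_del: "coeff (sbs (dlt j) (q::'r::finite pol)) 0 = lk q 0"
proof -
  have m: "coeff (mnm (dlt j) m) 0 = (if m = 0 then 1 else 0)" for m
  proof -
    have "coeff (mnm (dlt j) m) 0 = poly (mnm (dlt j) m) 0" by (simp add: poly_0_coeff_0)
    also have "\<dots> = (\<Prod>l\<in>UNIV. (0::int) ^ lk m l)"
      unfolding mnm_def poly_prod poly_power by (intro prod.cong refl) (simp add: dlt_def)
    also have "\<dots> = (if m = 0 then 1 else 0)"
    proof (cases "m = 0")
      case True then show ?thesis by simp
    next
      case False
      then obtain l where "lk m l \<noteq> 0" by (metis lookup_zero poly_mapping_eqI)
      then have "(0::int) ^ lk m l = 0" by simp
      then have "(\<Prod>l\<in>UNIV. (0::int) ^ lk m l) = 0" by (intro prod_zero) auto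
      then show ?thesis using False by simp
    qed
    finally show ?thesis .
  qed
  have "coeff (sbs (dlt j) q) 0 = (\<Sum>m\<in>ks q. lk q m * (if m = 0 then 1 else 0))"
    unfolding sbs_def coeff_sum by (intro sum.cong refl) (simp add: of_int_poly m)
  also have "\<dots> = lk q 0"
    by (cases "0 \<in> ks q") (auto simp: in_keys_iff if_distrib cong: if_cong)
  finally show ?thesis .
qed

lemma lin_dvd_lin:
  fixes a b :: "'r::finite \<Rightarrow> int"
  assumes "lin a dvd lin b"
  shows "\<exists>k. \<forall>l. b l = k * a l"
proof -
  obtain q where q: "lin b = lin a * q" using assms by (auto elim: dvdE)
  have "b l = lk q 0 * a l" for l
  proof -
    have "[:0, b l:] = [:0, a l:] * sbs (dlt l) q"
      using q by (metis sbs_del_lin sbs_mult)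
    then have "coeff [:0, b l:] 1 = coeff ([:0, a l:] * sbs (dlt l) q) 1" by simp
    also have "\<dots> = a l * coeff (sbs (dlt l) q) 0"
      by (simp add: mult_pCons_left coeff_pCons)
    finally show ?thesis by (simp add: coeff0_sbs_del)
  qed
  then show ?thesis by blast
qed



lemma prm_dvd_prod:
  assumes "prm p" "finite S" "p dvd (\<Prod>x\<in>S. f x)"
  shows "\<exists>x\<in>S. p dvd f x"
  using assms(2,3)
proof (induction S rule: finite_induct)
  case empty
  then show ?case using assms(1) by (simp add: prm_def)
next
  case (insert x S)
  then have "p dvd f x * (\<Prod>x\<in>S. f x)" by simp
  then have "p dvd f x \<or> p dvd (\<Prod>x\<in>S. f x)" using assms(1) by (simp add: prm_def)
  then show ?case using insert by blast
qed

lemma prod_dvd_of_prms: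
  assumes "finite S" "\<And>x. x \<in> S \<Longrightarrow> prm (f x)"
    and "\<And>x y. x \<in> S \<Longrightarrow> y \<in> S \<Longrightarrow> x \<noteq> y \<Longrightarrow> \<not> f x dvd f y"
    and "\<And>x. x \<in> S \<Longrightarrow> f x dvd d"
  shows "(\<Prod>x\<in>S. f x) dvd d"
  using assms
proof (induction S rule: finite_induct)
  case empty
  then show ?case by simp
next
  case (insert x S)
  have IH: "(\<Prod>x\<in>S. f x) dvd d" using insert by auto
  then obtain m where m: "d = (\<Prod>x\<in>S. f x) * m" by (auto elim: dvdE)
  have px: "prm (f x)" using insert by auto
  have "f x dvd (\<Prod>x\<in>S. f x) * m" using insert.prems(3)[of x] m by simp
  then have "f x dvd (\<Prod>x\<in>S. f x) \<or> f x dvd m" using px by (simp add: prm_def)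
  moreover have "\<not> f x dvd (\<Prod>x\<in>S. f x)"
  proof
    assume "f x dvd (\<Prod>x\<in>S. f x)"
    then obtain y where "y \<in> S" "f x dvd f y" using prm_dvd_prod[OF px insert.hyps(1)] by blast
    then show False using insert.prems(2)[of x y] insert.hyps(2) by auto
  qed
  ultimately have "f x dvd m" by blast
  then show ?case using m insert.hyps by (simp add: mult_dvd_mono mult.commute)
qed

lemma prim_of_Gcd: "Gcd (range a) = (1::int) \<Longrightarrow> prim a"
  unfolding prim_def by (metis Gcd_greatest rangeE)

lemma assoc_of_dvd:
  fixes a b :: "'r::finite \<Rightarrow> int"
  assumes "lin a dvd lin b" "prim b"
  shows "b = a \<or> b = - a"
proof -
  obtain k where k: "\<forall>l. b l = k * a l" using lin_dvd_lin[OF assms(1)] by blast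
  then have "k dvd 1" using assms(2) unfolding prim_def by (metis dvd_triv_left)
  then have "k = 1 \<or> k = -1" by (simp add: zdvd1_eq abs_if split: if_splits)
  then show ?thesis using k by (auto simp: fun_eq_iff)
qed

lemma lin_neg: "lin (- a) = - lin a"
  using lin_uminus[of a] by (simp add: fun_Compl_def)

lemma lin_eq_0: "lin a = (0::'r::finite pol) \<Longrightarrow> a j = 0"
  using sbs_del_lin[of j a] by simp

lemma prim_lin_nz: "prim (a::'r::finite \<Rightarrow> int) \<Longrightarrow> lin a \<noteq> 0"
proof
  assume p: "prim a" and z: "lin a = 0"
  then have "\<forall>l. (2::int) dvd a l" using lin_eq_0[OF z] by simp
  then have "(2::int) dvd 1" using p unfolding prim_def by blast
  then show False by simp
qed

lemma prod_nz_pol: "finite S \<Longrightarrow> (\<And>x. x \<in> S \<Longrightarrow> f x \<noteq> 0) \<Longrightarrow> (\<Prod>x\<in>S. f x) \<noteq> (0::'r::finite pol)"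
  by (induction S rule: finite_induct) auto

locale gkm =
  fixes n :: nat and V :: "'v set" and E :: "'e set" and src tgt :: "'e \<Rightarrow> 'v"
    and rv :: "'e \<Rightarrow> 'e" and \<alpha> :: "'e \<Rightarrow> ('r::finite \<Rightarrow> int)"
  assumes G: "gkm_graph n V E src tgt rv \<alpha>"
begin

lemma finV: "finite V" and finE: "finite E"
  using G by (auto simp: gkm_graph_def)

lemma edge:
  assumes "e \<in> E"
  shows "src e \<in> V" "tgt e \<in> V" "src e \<noteq> tgt e" "rv e \<in> E" "src (rv e) = tgt e" "tgt (rv e) = src e"
  using G assms by (auto simp: gkm_graph_def)

lemma rv_lab: "e \<in> E \<Longrightarrow> \<alpha> (rv e) = \<alpha> e \<or> \<alpha> (rv e) = - \<alpha> e"
  using G by (auto simp: gkm_graph_def)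

lemma indep: "e \<in> E \<Longrightarrow> e' \<in> E \<Longrightarrow> e \<noteq> e' \<Longrightarrow> src e = src e' \<Longrightarrow>
    (\<forall>i. a * \<alpha> e i + b * \<alpha> e' i = 0) \<Longrightarrow> a = 0 \<and> b = 0"
  using G unfolding gkm_graph_def by blast

lemma prim_e: "e \<in> E \<Longrightarrow> prim (\<alpha> e)"
  using G by (auto simp: gkm_graph_def intro: prim_of_Gcd)

lemma prm_e: "e \<in> E \<Longrightarrow> prm (lin (\<alpha> e))"
  by (rule prm_lin_prim[OF prim_e])

lemma lab_nz: "e \<in> E \<Longrightarrow> lin (\<alpha> e) \<noteq> 0"
  by (rule prim_lin_nz[OF prim_e])

lemma lab_pm: "e \<in> E \<Longrightarrow> e' \<in> E \<Longrightarrow> e \<noteq> e' \<Longrightarrow> src e = src e' \<Longrightarrow>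
   \<alpha> e' \<noteq> \<alpha> e \<and> \<alpha> e' \<noteq> - \<alpha> e"
proof
  assume a: "e \<in> E" "e' \<in> E" "e \<noteq> e'" "src e = src e'"
  show "\<alpha> e' \<noteq> \<alpha> e"
  proof
    assume "\<alpha> e' = \<alpha> e"
    then have "\<forall>i. 1 * \<alpha> e i + (-1) * \<alpha> e' i = 0" by simp
    then have "(1::int) = 0 \<and> (-1::int) = 0" by (rule indep[OF a])
    then show False by simp
  qed
  show "\<alpha> e' \<noteq> - \<alpha> e"
  proof
    assume "\<alpha> e' = - \<alpha> e"
    then have "\<forall>i. 1 * \<alpha> e i + 1 * \<alpha> e' i = 0" by simp
    then have "(1::int) = 0 \<and> (1::int) = 0" by (rule indep[OF a])
    then show False by simp
  qed
qed

lemma no_assoc: "e \<in> E \<Longrightarrow> e' \<in> E \<Longrightarrow> e \<noteq> e' \<Longrightarrow> src e = src e' \<Longrightarrow>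
   \<not> lin (\<alpha> e) dvd lin (\<alpha> e')"
  using assoc_of_dvd[of "\<alpha> e" "\<alpha> e'"] prim_e lab_pm by blast

lemma lab_rv_dvd: "e \<in> E \<Longrightarrow> lin (\<alpha> (rv e)) dvd x \<Longrightarrow> lin (\<alpha> e) dvd x"
  using rv_lab[of e] by (auto simp: lin_neg)

abbreviation A where "A \<equiv> gkm_cohom V E src tgt \<alpha>"
abbreviation PP where "PP \<equiv> P_prod E src tgt \<alpha>"

lemma inA_zero: "f \<in> A \<Longrightarrow> v \<notin> V \<Longrightarrow> f v = 0"
  by (simp add: gkm_cohom_def)

lemma char:
  "f \<in> A \<longleftrightarrow> (\<forall>v. v \<notin> V \<longrightarrow> f v = 0) \<and> (\<forall>p\<in>V. \<forall>q\<in>V. p \<noteq> q \<longrightarrow> PP p q dvd f p - f q)"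
proof
  assume f: "f \<in> A"
  show "(\<forall>v. v \<notin> V \<longrightarrow> f v = 0) \<and> (\<forall>p\<in>V. \<forall>q\<in>V. p \<noteq> q \<longrightarrow> PP p q dvd f p - f q)"
  proof (intro conjI ballI allI impI)
    show "v \<notin> V \<Longrightarrow> f v = 0" for v using f by (simp add: gkm_cohom_def)
    fix p q assume "p \<in> V" "q \<in> V" "p \<noteq> q"
    show "PP p q dvd f p - f q"
      unfolding P_prod_def
    proof (rule prod_dvd_of_prms)
      show "finite {e \<in> E. src e = p \<and> tgt e = q}" using finE by simp
      show "prm (lin (\<alpha> e))" if "e \<in> {e \<in> E. src e = p \<and> tgt e = q}" for e
        using that prm_e by auto
      show "\<not> lin (\<alpha> x) dvd lin (\<alpha> y)" if "x \<in> {e \<in> E. src e = p \<and> tgt e = q}"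
          "y \<in> {e \<in> E. src e = p \<and> tgt e = q}" "x \<noteq> y" for x y
        using that no_assoc by auto
      show "lin (\<alpha> e) dvd f p - f q" if "e \<in> {e \<in> E. src e = p \<and> tgt e = q}" for e
        using that f by (auto simp: gkm_cohom_def)
    qed
  qed
next
  assume H: "(\<forall>v. v \<notin> V \<longrightarrow> f v = 0) \<and> (\<forall>p\<in>V. \<forall>q\<in>V. p \<noteq> q \<longrightarrow> PP p q dvd f p - f q)"
  have "lin (\<alpha> e) dvd f (src e) - f (tgt e)" if e: "e \<in> E" for e
  proof -
    have "lin (\<alpha> e) dvd PP (src e) (tgt e)"
      unfolding P_prod_def by (rule dvd_prodI) (use finE e in auto)
    also have "PP (src e) (tgt e) dvd f (src e) - f (tgt e)" using H edge[OF e] by auto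
    finally show ?thesis .
  qed
  then show "f \<in> A" using H by (simp add: gkm_cohom_def)
qed

lemma A_add: "f \<in> A \<Longrightarrow> g \<in> A \<Longrightarrow> (\<lambda>v. f v + g v) \<in> A"
proof -
  assume "f \<in> A" "g \<in> A"
  then show ?thesis unfolding gkm_cohom_def
    by (auto simp: diff_add_eq add_diff_eq) (metis (no_types, lifting) add_diff_add dvd_add)
qed

lemma A_mult: "f \<in> A \<Longrightarrow> g \<in> A \<Longrightarrow> (\<lambda>v. f v * g v) \<in> A"
  unfolding gkm_cohom_def by (auto intro: dvd_diff_mult)

lemma A_smult: "f \<in> A \<Longrightarrow> (\<lambda>v. c * f v) \<in> A"
  unfolding gkm_cohom_def by (auto simp flip: right_diff_distrib)

lemma A_one: "one_on V \<in> A"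
  unfolding gkm_cohom_def one_on_def using edge by auto

lemma ind_in_A:
  assumes "S \<subseteq> V" "\<And>e. e \<in> E \<Longrightarrow> src e \<in> S \<Longrightarrow> tgt e \<notin> S \<Longrightarrow> lin (\<alpha> e) dvd c"
  shows "(\<lambda>v. if v \<in> S then c else 0) \<in> A"
  unfolding gkm_cohom_def
proof (intro CollectI conjI allI impI ballI)
  show "v \<notin> V \<Longrightarrow> (if v \<in> S then c else 0) = 0" for v using assms(1) by auto
  fix e assume e: "e \<in> E"
  show "lin (\<alpha> e) dvd (if src e \<in> S then c else 0) - (if tgt e \<in> S then c else 0)"
  proof (cases "src e \<in> S"; cases "tgt e \<in> S")
    assume "src e \<in> S" "tgt e \<notin> S"
    then show ?thesis using assms(2)[OF e] by simp
  next
    assume "src e \<notin> S" "tgt e \<in> S"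
    then have "lin (\<alpha> (rv e)) dvd c" using assms(2)[OF edge(4)[OF e]] edge[OF e] by simp
    then show ?thesis using lab_rv_dvd[OF e] \<open>src e \<notin> S\<close> \<open>tgt e \<in> S\<close> by simp
  qed auto
qed

lemma zero_in_A: "(\<lambda>v. 0) \<in> A"
  by (simp add: gkm_cohom_def)

definition Lam where "Lam p = (\<Prod>e\<in>out_edges E src p. lin (\<alpha> e))"

lemma Lam_nz: "Lam p \<noteq> 0"
  unfolding Lam_def using lab_nz finE by (intro prod_nz_pol) (auto simp: out_edges_def)

lemma dvd_Lam: "e \<in> E \<Longrightarrow> src e = p \<Longrightarrow> lin (\<alpha> e) dvd Lam p"
  unfolding Lam_def by (rule dvd_prodI) (use finE in \<open>auto simp: out_edges_def\<close>)

definition ep where "ep p = (\<lambda>v. if v \<in> {p} then Lam p else 0)"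

lemma ep_in_A: "p \<in> V \<Longrightarrow> ep p \<in> A"
  unfolding ep_def by (rule ind_in_A) (auto intro: dvd_Lam)

end

definition pmeq :: "('r \<Rightarrow> int) \<Rightarrow> ('r \<Rightarrow> int) \<Rightarrow> bool" where
  "pmeq a b \<longleftrightarrow> a = b \<or> a = - b"

lemma pmeq_sym: "pmeq a b \<Longrightarrow> pmeq b a"
  by (auto simp: pmeq_def fun_eq_iff)

lemma pmeq_trans: "pmeq a b \<Longrightarrow> pmeq b c \<Longrightarrow> pmeq a c"
  by (auto simp: pmeq_def fun_eq_iff)

lemma prod_pm:
  fixes u v :: "'a \<Rightarrow> 'b::comm_ring_1"
  assumes "finite Y" "\<And>y. y \<in> Y \<Longrightarrow> u y = v y \<or> u y = - v y"
  shows "(\<Prod>y\<in>Y. u y) = (\<Prod>y\<in>Y. v y) \<or> (\<Prod>y\<in>Y. u y) = - (\<Prod>y\<in>Y. v y)"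
  using assms
proof (induction Y rule: finite_induct)
  case empty then show ?case by simp
next
  case (insert y Y)
  then have "(\<Prod>y\<in>Y. u y) = (\<Prod>y\<in>Y. v y) \<or> (\<Prod>y\<in>Y. u y) = - (\<Prod>y\<in>Y. v y)" by auto
  moreover have "u y = v y \<or> u y = - v y" using insert by auto
  ultimately show ?case using insert.hyps by auto
qed

lemma match_prod:
  fixes la :: "'a \<Rightarrow> ('r::finite \<Rightarrow> int)" and lb :: "'b \<Rightarrow> ('r \<Rightarrow> int)"
  assumes fin: "finite XS" "finite YS"
    and YX: "\<And>y. y \<in> YS \<Longrightarrow> \<exists>x\<in>XS. pmeq (la x) (lb y)"
    and XY: "\<And>x. x \<in> XS \<Longrightarrow> \<exists>y\<in>YS. pmeq (lb y) (la x)"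
    and dX: "\<And>x1 x2. x1 \<in> XS \<Longrightarrow> x2 \<in> XS \<Longrightarrow> x1 \<noteq> x2 \<Longrightarrow> \<not> pmeq (la x1) (la x2)"
    and dY: "\<And>y1 y2. y1 \<in> YS \<Longrightarrow> y2 \<in> YS \<Longrightarrow> y1 \<noteq> y2 \<Longrightarrow> \<not> pmeq (lb y1) (lb y2)"
  shows "(\<Prod>x\<in>XS. lin (la x)) = (\<Prod>y\<in>YS. lin (lb y)) \<or> (\<Prod>x\<in>XS. lin (la x)) = - (\<Prod>y\<in>YS. lin (lb y))"
proof -
  define h where "h y = (SOME x. x \<in> XS \<and> pmeq (la x) (lb y))" for y
  have h: "h y \<in> XS \<and> pmeq (la (h y)) (lb y)" if "y \<in> YS" for y
    unfolding h_def using YX[OF that] by (rule someI2_bex) auto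
  have bij: "bij_betw h YS XS"
  proof (rule bij_betw_imageI)
    show "inj_on h YS"
    proof (rule inj_onI)
      fix y1 y2 assume y: "y1 \<in> YS" "y2 \<in> YS" "h y1 = h y2"
      then have "pmeq (lb y1) (lb y2)"
        using h[OF y(1)] h[OF y(2)] by (metis pmeq_sym pmeq_trans)
      then show "y1 = y2" using dY y by blast
    qed
    show "h ` YS = XS"
    proof
      show "h ` YS \<subseteq> XS" using h by auto
      show "XS \<subseteq> h ` YS"
      proof
        fix x assume x: "x \<in> XS"
        then obtain y where y: "y \<in> YS" "pmeq (lb y) (la x)" using XY by blast
        then have "pmeq (la (h y)) (la x)" using h[OF y(1)] by (metis pmeq_trans)
        then have "h y = x" using dX x h[OF y(1)] by blast
        then show "x \<in> h ` YS" using y by blast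
      qed
    qed
  qed
  have "(\<Prod>x\<in>XS. lin (la x)) = (\<Prod>y\<in>YS. lin (la (h y)))"
    using prod.reindex_bij_betw[OF bij, of "\<lambda>x. lin (la x)"] by simp
  moreover have "(\<Prod>y\<in>YS. lin (la (h y))) = (\<Prod>y\<in>YS. lin (lb y)) \<or> (\<Prod>y\<in>YS. lin (la (h y))) = - (\<Prod>y\<in>YS. lin (lb y))"
  proof (rule prod_pm[OF fin(2)])
    fix y assume "y \<in> YS"
    then have "la (h y) = lb y \<or> la (h y) = - lb y" using h pmeq_def by auto
    then show "lin (la (h y)) = lin (lb y) \<or> lin (la (h y)) = - lin (lb y)" by (auto simp: lin_neg)
  qed
  ultimately show ?thesis by simp
qed

locale gkm2 = G: gkm n V E src tgt rv \<alpha> + H: gkm n' V' E' src' tgt' rv' \<alpha>'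
  for n V E src tgt rv and \<alpha> :: "'e \<Rightarrow> ('r::finite \<Rightarrow> int)"
    and n' V' E' src' tgt' rv' and \<alpha>' :: "'f \<Rightarrow> ('r \<Rightarrow> int)"
begin

lemma iso_to_alg:
  assumes iso: "gkm_iso V' E' src' tgt' \<alpha>' V E src tgt \<alpha> \<phi>"
  shows "\<exists>\<Phi>. alg_iso V G.A V' H.A \<Phi>"
proof -
  have bij: "bij_betw \<phi> V' V" using iso by (simp add: gkm_iso_def)
  have PP: "\<And>p q. p \<in> V' \<Longrightarrow> q \<in> V' \<Longrightarrow> p \<noteq> q \<Longrightarrow>
      G.PP (\<phi> p) (\<phi> q) = H.PP p q \<or> G.PP (\<phi> p) (\<phi> q) = - H.PP p q"
    using iso by (simp add: gkm_iso_def)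
  define \<psi> where "\<psi> = inv_into V' \<phi>"
  have \<psi>: "\<And>v. v \<in> V \<Longrightarrow> \<psi> v \<in> V' \<and> \<phi> (\<psi> v) = v"
    using bij unfolding \<psi>_def by (metis bij_betw_inv_into_right bij_betw_imp_surj_on inv_into_into)
  have \<phi>: "\<And>w. w \<in> V' \<Longrightarrow> \<phi> w \<in> V \<and> \<psi> (\<phi> w) = w"
    using bij unfolding \<psi>_def by (meson bij_betw_apply bij_betw_inv_into_left)
  have inj: "\<And>p q. p \<in> V' \<Longrightarrow> q \<in> V' \<Longrightarrow> p \<noteq> q \<Longrightarrow> \<phi> p \<noteq> \<phi> q"
    using \<phi> by metis
  define \<Phi> where "\<Phi> f = (\<lambda>w. if w \<in> V' then f (\<phi> w) else (0::'r pol))" for f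
  define \<Psi> where "\<Psi> g = (\<lambda>v. if v \<in> V then g (\<psi> v) else (0::'r pol))" for g
  have \<Phi>A: "\<Phi> f \<in> H.A" if f: "f \<in> G.A" for f
    unfolding H.char
  proof (intro conjI allI impI ballI)
    show "v \<notin> V' \<Longrightarrow> \<Phi> f v = 0" for v by (simp add: \<Phi>_def)
    fix p q assume pq: "p \<in> V'" "q \<in> V'" "p \<noteq> q"
    have "G.PP (\<phi> p) (\<phi> q) dvd f (\<phi> p) - f (\<phi> q)"
      using f pq \<phi> inj unfolding G.char by blast
    moreover have "H.PP p q dvd G.PP (\<phi> p) (\<phi> q)" using PP[OF pq] by auto
    ultimately show "H.PP p q dvd \<Phi> f p - \<Phi> f q" using pq by (simp add: \<Phi>_def) (rule dvd_trans)
  qed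
  have \<Psi>A: "\<Psi> g \<in> G.A" if g: "g \<in> H.A" for g
    unfolding G.char
  proof (intro conjI allI impI ballI)
    show "v \<notin> V \<Longrightarrow> \<Psi> g v = 0" for v by (simp add: \<Psi>_def)
    fix p q assume pq: "p \<in> V" "q \<in> V" "p \<noteq> q"
    have pq': "\<psi> p \<in> V'" "\<psi> q \<in> V'" "\<psi> p \<noteq> \<psi> q" using \<psi> pq by metis+
    have "H.PP (\<psi> p) (\<psi> q) dvd g (\<psi> p) - g (\<psi> q)"
      using g pq' unfolding H.char by blast
    moreover have "G.PP p q dvd H.PP (\<psi> p) (\<psi> q)" using PP[OF pq'] \<psi> pq by auto
    ultimately show "G.PP p q dvd \<Psi> g p - \<Psi> g q" using pq by (simp add: \<Psi>_def) (rule dvd_trans)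
  qed
  have "alg_iso V G.A V' H.A \<Phi>"
    unfolding alg_iso_def
  proof (intro conjI ballI allI)
    show "bij_betw \<Phi> G.A H.A"
    proof (rule bij_betw_byWitness[where f'=\<Psi>])
      show "\<forall>f\<in>G.A. \<Psi> (\<Phi> f) = f"
        using \<phi> \<psi> G.inA_zero by (auto simp: \<Phi>_def \<Psi>_def fun_eq_iff)
      show "\<forall>g\<in>H.A. \<Phi> (\<Psi> g) = g"
        using \<phi> \<psi> H.inA_zero by (auto simp: \<Phi>_def \<Psi>_def fun_eq_iff)
      show "\<Phi> ` G.A \<subseteq> H.A" using \<Phi>A by auto
      show "\<Psi> ` H.A \<subseteq> G.A" using \<Psi>A by auto
    qed
    show "\<Phi> (\<lambda>v. f v + g v) = (\<lambda>w. \<Phi> f w + \<Phi> g w)" for f g by (simp add: \<Phi>_def fun_eq_iff)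
    show "\<Phi> (\<lambda>v. f v * g v) = (\<lambda>w. \<Phi> f w * \<Phi> g w)" for f g by (simp add: \<Phi>_def fun_eq_iff)
    show "\<Phi> (\<lambda>v. c * f v) = (\<lambda>w. c * \<Phi> f w)" for c f by (simp add: \<Phi>_def fun_eq_iff)
    show "\<Phi> (one_on V) = one_on V'" using \<phi> by (auto simp: \<Phi>_def one_on_def fun_eq_iff)
  qed
  then show ?thesis by blast
qed

lemma rec:
  assumes \<tau>V: "\<forall>x\<in>V'. \<tau> x \<in> V" and \<tau>inj: "inj_on \<tau> V'"
    and T: "\<forall>f\<in>G.A. \<exists>g\<in>H.A. \<forall>x\<in>V'. g x = f (\<tau> x)"
    and e': "e' \<in> E'"
  shows "\<exists>e\<in>E. src e = \<tau> (src' e') \<and> tgt e = \<tau> (tgt' e') \<and> pmeq (\<alpha> e) (\<alpha>' e')"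
proof (rule ccontr)
  assume contra: "\<not> ?thesis"
  define p where "p = \<tau> (src' e')"
  define s where "s = \<tau> (tgt' e')"
  have pV: "p \<in> V" and sV: "s \<in> V" using \<tau>V H.edge[OF e'] by (auto simp: p_def s_def)
  have ps: "p \<noteq> s" using \<tau>inj H.edge[OF e'] unfolding p_def s_def by (metis inj_onD)
  define l' where "l' = lin (\<alpha>' e')"
  have key: "l' dvd f p - f s" if f: "f \<in> G.A" for f
  proof -
    obtain g where g: "g \<in> H.A" "\<forall>x\<in>V'. g x = f (\<tau> x)" using T f by blast
    have "l' dvd g (src' e') - g (tgt' e')" using g(1) e' by (simp add: gkm_cohom_def l'_def)
    then show ?thesis using g(2) H.edge[OF e'] by (simp add: p_def s_def)
  qed
  have prl: "prm l'" unfolding l'_def by (rule H.prm_e[OF e'])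
  have pm_of: "pmeq (\<alpha> e) (\<alpha>' e')" if "e \<in> E" "l' dvd lin (\<alpha> e)" for e
    using assoc_of_dvd[of "\<alpha>' e'" "\<alpha> e"] that G.prim_e unfolding l'_def pmeq_def by blast
  show False
  proof (cases "\<exists>e0\<in>E. src e0 = p \<and> pmeq (\<alpha> e0) (\<alpha>' e')")
    case True
    then obtain e0 where e0: "e0 \<in> E" "src e0 = p" "pmeq (\<alpha> e0) (\<alpha>' e')" by blast
    define q0 where "q0 = tgt e0"
    have q0s: "q0 \<noteq> s" using contra e0 unfolding q0_def p_def s_def by blast
    have q0p: "q0 \<noteq> p" using G.edge[OF e0(1)] e0(2) by (simp add: q0_def)
    have q0V: "q0 \<in> V" using G.edge[OF e0(1)] by (simp add: q0_def)
    define P1 where "P1 = (\<Prod>e\<in>out_edges E src p - {e0}. lin (\<alpha> e))"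
    define P2 where "P2 = (\<Prod>e\<in>out_edges E src q0 - {rv e0}. lin (\<alpha> e))"
    have fin1: "finite (out_edges E src p - {e0})" and fin2: "finite (out_edges E src q0 - {rv e0})"
      using G.finE by (auto simp: out_edges_def)
    have fA: "(\<lambda>v. if v \<in> {p, q0} then P1 * P2 else 0) \<in> G.A"
    proof (rule G.ind_in_A)
      show "{p, q0} \<subseteq> V" using pV q0V by auto
      fix e assume e: "e \<in> E" "src e \<in> {p, q0}" "tgt e \<notin> {p, q0}"
      show "lin (\<alpha> e) dvd P1 * P2"
      proof (cases "src e = p")
        case True
        have "e \<noteq> e0" using e(3) by (auto simp: q0_def)
        then have "lin (\<alpha> e) dvd P1" unfolding P1_def
          by (intro dvd_prodI[OF fin1]) (use e True in \<open>auto simp: out_edges_def\<close>)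
        then show ?thesis by simp
      next
        case False
        then have "src e = q0" using e(2) by auto
        moreover have "e \<noteq> rv e0" using e(3) G.edge[OF e0(1)] e0(2) by auto
        ultimately have "lin (\<alpha> e) dvd P2" unfolding P2_def
          by (intro dvd_prodI[OF fin2]) (use e in \<open>auto simp: out_edges_def\<close>)
        then show ?thesis by simp
      qed
    qed
    have "l' dvd P1 * P2" using key[OF fA] q0s ps by simp
    then have "l' dvd P1 \<or> l' dvd P2" using prl by (simp add: prm_def)
    then show False
    proof
      assume "l' dvd P1"
      then obtain e where e: "e \<in> out_edges E src p - {e0}" "l' dvd lin (\<alpha> e)"
        using prm_dvd_prod[OF prl fin1] unfolding P1_def by blast
      then have eE: "e \<in> E" "src e = p" "e \<noteq> e0" by (auto simp: out_edges_def)
      have "pmeq (\<alpha> e) (\<alpha> e0)" using pm_of[OF eE(1) e(2)] e0(3) by (meson pmeq_sym pmeq_trans)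
      then show False using G.lab_pm[OF e0(1) eE(1) eE(3)[symmetric]] eE(2) e0(2) by (auto simp: pmeq_def)
    next
      assume "l' dvd P2"
      then obtain e where e: "e \<in> out_edges E src q0 - {rv e0}" "l' dvd lin (\<alpha> e)"
        using prm_dvd_prod[OF prl fin2] unfolding P2_def by blast
      then have eE: "e \<in> E" "src e = q0" "e \<noteq> rv e0" by (auto simp: out_edges_def)
      have "pmeq (\<alpha> (rv e0)) (\<alpha> e0)" using G.rv_lab[OF e0(1)] by (simp add: pmeq_def)
      then have "pmeq (\<alpha> e) (\<alpha> (rv e0))" using pm_of[OF eE(1) e(2)] e0(3) by (meson pmeq_sym pmeq_trans)
      moreover have "src (rv e0) = src e" using G.edge[OF e0(1)] eE(2) by (simp add: q0_def)
      ultimately show False using G.lab_pm[OF G.edge(4)[OF e0(1)] eE(1) eE(3)[symmetric]] by (auto simp: pmeq_def)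
    qed
  next
    case False
    have "l' dvd G.Lam p" using key[OF G.ep_in_A[OF pV]] ps by (simp add: G.ep_def)
    moreover have "finite (out_edges E src p)" using G.finE by (simp add: out_edges_def)
    ultimately obtain e where e: "e \<in> out_edges E src p" "l' dvd lin (\<alpha> e)"
      using prm_dvd_prod[OF prl] unfolding G.Lam_def by blast
    then show False using False pm_of by (auto simp: out_edges_def)
  qed
qed

lemma alg_Phi0:
  assumes "alg_iso V G.A V' H.A \<Phi>"
  shows "\<Phi> (\<lambda>v. 0) = (\<lambda>w. 0)"
proof -
  have "\<forall>f\<in>G.A. \<forall>g\<in>G.A. \<Phi> (\<lambda>v. f v + g v) = (\<lambda>w. \<Phi> f w + \<Phi> g w)"
    using assms unfolding alg_iso_def by blast
  from this[rule_format, OF G.zero_in_A G.zero_in_A]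
  have "\<Phi> (\<lambda>v. 0 + 0) = (\<lambda>w. \<Phi> (\<lambda>v. 0) w + \<Phi> (\<lambda>v. 0) w)" by simp
  then have "\<Phi> (\<lambda>v. 0) w = \<Phi> (\<lambda>v. 0) w + \<Phi> (\<lambda>v. 0) w" for w by (simp add: fun_eq_iff)
  then show ?thesis by (simp add: fun_eq_iff)
qed

lemma alg_inv:
  assumes iso: "alg_iso V G.A V' H.A \<Phi>"
  shows "alg_iso V' H.A V G.A (the_inv_into G.A \<Phi>)"
proof -
  define \<Psi> where "\<Psi> = the_inv_into G.A \<Phi>"
  have bij: "bij_betw \<Phi> G.A H.A" using iso by (simp add: alg_iso_def)
  have \<Psi>A: "g \<in> H.A \<Longrightarrow> \<Psi> g \<in> G.A" for g
    unfolding \<Psi>_def using bij by (metis bij_betw_def the_inv_into_into order_refl)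
  have \<Phi>\<Psi>: "g \<in> H.A \<Longrightarrow> \<Phi> (\<Psi> g) = g" for g
    unfolding \<Psi>_def using bij by (simp add: f_the_inv_into_f_bij_betw)
  have \<Psi>\<Phi>: "f \<in> G.A \<Longrightarrow> \<Psi> (\<Phi> f) = f" for f
    unfolding \<Psi>_def using bij by (simp add: bij_betw_def the_inv_into_f_f)
  have add: "\<Phi> (\<lambda>v. f v + g v) = (\<lambda>w. \<Phi> f w + \<Phi> g w)"
    and mul: "\<Phi> (\<lambda>v. f v * g v) = (\<lambda>w. \<Phi> f w * \<Phi> g w)"
    and sm: "\<Phi> (\<lambda>v. c * f v) = (\<lambda>w. c * \<Phi> f w)"
    if "f \<in> G.A" "g \<in> G.A" for f g c
    using iso that unfolding alg_iso_def by blast+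
  have "alg_iso V' H.A V G.A \<Psi>"
    unfolding alg_iso_def
  proof (intro conjI ballI allI)
    show "bij_betw \<Psi> H.A G.A" unfolding \<Psi>_def using bij by (rule bij_betw_the_inv_into)
    fix g1 g2 assume g: "g1 \<in> H.A" "g2 \<in> H.A"
    show "\<Psi> (\<lambda>v. g1 v + g2 v) = (\<lambda>w. \<Psi> g1 w + \<Psi> g2 w)"
      using add[OF \<Psi>A[OF g(1)] \<Psi>A[OF g(2)]] \<Psi>\<Phi>[OF G.A_add[OF \<Psi>A[OF g(1)] \<Psi>A[OF g(2)]]]
      by (simp add: \<Phi>\<Psi> g)
    show "\<Psi> (\<lambda>v. g1 v * g2 v) = (\<lambda>w. \<Psi> g1 w * \<Psi> g2 w)"
      using mul[OF \<Psi>A[OF g(1)] \<Psi>A[OF g(2)]] \<Psi>\<Phi>[OF G.A_mult[OF \<Psi>A[OF g(1)] \<Psi>A[OF g(2)]]]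
      by (simp add: \<Phi>\<Psi> g)
  next
    fix c g assume g: "g \<in> H.A"
    show "\<Psi> (\<lambda>v. c * g v) = (\<lambda>w. c * \<Psi> g w)"
      using sm[OF \<Psi>A[OF g] \<Psi>A[OF g], of c] \<Psi>\<Phi>[OF G.A_smult[OF \<Psi>A[OF g]], of c]
      by (simp add: \<Phi>\<Psi> g)
  next
    show "\<Psi> (one_on V') = one_on V"
      using iso \<Psi>\<Phi>[OF G.A_one] by (simp add: alg_iso_def)
  qed
  then show ?thesis by (simp add: \<Psi>_def)
qed

lemma blocks:
  assumes iso: "alg_iso V G.A V' H.A \<Phi>"
  shows "\<exists>wm. inj_on wm V \<and> (\<forall>p\<in>V. wm p \<in> V' \<and> \<Phi> (G.ep p) (wm p) = G.Lam p)"
proof -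
  have bij: "bij_betw \<Phi> G.A H.A" using iso by (simp add: alg_iso_def)
  have mul: "\<Phi> (\<lambda>v. f v * g v) = (\<lambda>w. \<Phi> f w * \<Phi> g w)"
    and sm: "\<Phi> (\<lambda>v. c * f v) = (\<lambda>w. c * \<Phi> f w)"
    if "f \<in> G.A" "g \<in> G.A" for f g c
    using iso that unfolding alg_iso_def by blast+
  have \<Phi>0: "\<Phi> (\<lambda>v. 0) = (\<lambda>w. 0)" by (rule alg_Phi0[OF iso])
  have val: "\<Phi> (G.ep p) x = 0 \<or> \<Phi> (G.ep p) x = G.Lam p" if p: "p \<in> V" for p x
  proof -
    have "(\<lambda>v. G.ep p v * G.ep p v) = (\<lambda>v. G.Lam p * G.ep p v)"
      by (simp add: G.ep_def fun_eq_iff)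
    then have "\<Phi> (G.ep p) x * \<Phi> (G.ep p) x = G.Lam p * \<Phi> (G.ep p) x"
      using mul[OF G.ep_in_A[OF p] G.ep_in_A[OF p]] sm[OF G.ep_in_A[OF p] G.ep_in_A[OF p], of "G.Lam p"]
      by (metis (mono_tags, lifting))
    then have "\<Phi> (G.ep p) x * (\<Phi> (G.ep p) x - G.Lam p) = 0" by (simp add: algebra_simps)
    then show ?thesis by simp
  qed
  have orth: "\<Phi> (G.ep p) x * \<Phi> (G.ep q) x = 0" if "p \<in> V" "q \<in> V" "p \<noteq> q" for p q x
  proof -
    have "(\<lambda>v. G.ep p v * G.ep q v) = (\<lambda>v. 0)" using that by (simp add: G.ep_def fun_eq_iff)
    then show ?thesis using mul[OF G.ep_in_A[OF that(1)] G.ep_in_A[OF that(2)]] \<Phi>0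
      by (metis (mono_tags, lifting))
  qed
  have ex: "\<exists>x\<in>V'. \<Phi> (G.ep p) x = G.Lam p" if p: "p \<in> V" for p
  proof (rule ccontr)
    assume "\<not> ?thesis"
    then have "\<Phi> (G.ep p) x = 0" for x
      using val[OF p, of x] H.inA_zero[of "\<Phi> (G.ep p)" x] bij G.ep_in_A[OF p] G.Lam_nz[of p]
      by (metis bij_betw_apply)
    then have "\<Phi> (G.ep p) = \<Phi> (\<lambda>v. 0)" using \<Phi>0 by (simp add: fun_eq_iff)
    then have "G.ep p = (\<lambda>v. 0)"
      using bij G.ep_in_A[OF p] G.zero_in_A by (metis bij_betw_def inj_onD)
    then have "G.Lam p = 0" by (metis G.ep_def singletonI)
    then show False using G.Lam_nz by simp
  qed
  define wm where "wm p = (SOME x. x \<in> V' \<and> \<Phi> (G.ep p) x = G.Lam p)" for p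
  have wm: "wm p \<in> V' \<and> \<Phi> (G.ep p) (wm p) = G.Lam p" if "p \<in> V" for p
    unfolding wm_def using ex[OF that] by (rule someI2_bex) auto
  have "inj_on wm V"
  proof (rule inj_onI)
    fix p q assume pq: "p \<in> V" "q \<in> V" "wm p = wm q"
    show "p = q"
    proof (rule ccontr)
      assume "p \<noteq> q"
      then have "\<Phi> (G.ep p) (wm p) * \<Phi> (G.ep q) (wm p) = 0" using orth pq by blast
      then have "G.Lam p * G.Lam q = 0" using wm pq by metis
      then show False using G.Lam_nz by simp
    qed
  qed
  then show ?thesis using wm by blast
qed

lemma eval:
  assumes iso: "alg_iso V G.A V' H.A \<Phi>" and p: "p \<in> V" and f: "f \<in> G.A"
    and x: "\<Phi> (G.ep p) x = G.Lam p"
  shows "\<Phi> f x = f p"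
proof -
  have mul: "\<Phi> (\<lambda>v. f v * G.ep p v) = (\<lambda>w. \<Phi> f w * \<Phi> (G.ep p) w)"
    and sm: "\<Phi> (\<lambda>v. f p * G.ep p v) = (\<lambda>w. f p * \<Phi> (G.ep p) w)"
    using iso f G.ep_in_A[OF p] unfolding alg_iso_def by blast+
  have "(\<lambda>v. f v * G.ep p v) = (\<lambda>v. f p * G.ep p v)" by (simp add: G.ep_def fun_eq_iff)
  then have "\<Phi> f x * G.Lam p = f p * G.Lam p" using mul sm x by metis
  then show ?thesis using pol_mult_cancel[of "G.Lam p" "\<Phi> f x" "f p"] G.Lam_nz by (simp add: mult.commute)
qed

lemma alg_to_iso:
  assumes iso: "alg_iso V G.A V' H.A \<Phi>"
  shows "\<exists>\<phi>. gkm_iso V' E' src' tgt' \<alpha>' V E src tgt \<alpha> \<phi>"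
proof -
  interpret S: gkm2 n' V' E' src' tgt' rv' \<alpha>' n V E src tgt rv \<alpha>
    by (simp add: gkm2_def H.gkm_axioms G.gkm_axioms)
  obtain wm where wm: "inj_on wm V" "\<forall>p\<in>V. wm p \<in> V' \<and> \<Phi> (G.ep p) (wm p) = G.Lam p"
    using blocks[OF iso] by blast
  define \<Psi> where "\<Psi> = the_inv_into G.A \<Phi>"
  have iso\<Psi>: "alg_iso V' H.A V G.A \<Psi>" unfolding \<Psi>_def by (rule alg_inv[OF iso])
  obtain wm' where wm': "inj_on wm' V'" "\<forall>p\<in>V'. wm' p \<in> V" using S.blocks[OF iso\<Psi>] by blast
  have c1: "card V \<le> card V'" using card_inj_on_le[OF wm(1) _ H.finV] wm(2) by auto
  have c2: "card V' \<le> card V" using card_inj_on_le[OF wm'(1) _ G.finV] wm'(2) by auto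
  have img: "wm ` V = V'"
  proof (rule card_subset_eq[OF H.finV])
    show "wm ` V \<subseteq> V'" using wm(2) by auto
    show "card (wm ` V) = card V'" using c1 c2 card_image[OF wm(1)] by simp
  qed
  have bwm: "bij_betw wm V V'" using wm(1) img by (simp add: bij_betw_def)
  define \<tau> where "\<tau> = inv_into V wm"
  have b\<tau>: "bij_betw \<tau> V' V" unfolding \<tau>_def by (rule bij_betw_inv_into[OF bwm])
  have \<tau>1: "x \<in> V' \<Longrightarrow> \<tau> x \<in> V \<and> wm (\<tau> x) = x" for x
    unfolding \<tau>_def using bwm img by (metis bij_betw_inv_into_right inv_into_into)
  have \<tau>2: "p \<in> V \<Longrightarrow> \<tau> (wm p) = p" for p
    unfolding \<tau>_def using wm(1) by (simp add: inv_into_f_f)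
  have bij\<Phi>: "bij_betw \<Phi> G.A H.A" using iso by (simp add: alg_iso_def)
  have ev: "\<Phi> f x = f (\<tau> x)" if "f \<in> G.A" "x \<in> V'" for f x
    using eval[OF iso _ that(1), of "\<tau> x" x] \<tau>1[OF that(2)] wm(2) by metis
  have T1: "\<forall>f\<in>G.A. \<exists>g\<in>H.A. \<forall>x\<in>V'. g x = f (\<tau> x)"
    using ev bij\<Phi> by (metis bij_betw_apply)
  have T2: "\<forall>g\<in>H.A. \<exists>f\<in>G.A. \<forall>x\<in>V. f x = g (wm x)"
  proof
    fix g assume g: "g \<in> H.A"
    obtain f where f: "f \<in> G.A" "\<Phi> f = g" using bij\<Phi> g by (metis bij_betw_imp_surj_on imageE)
    have "f x = g (wm x)" if "x \<in> V" for x
      using ev[OF f(1), of "wm x"] f(2) wm(2) \<tau>2 that by metis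
    then show "\<exists>f\<in>G.A. \<forall>x\<in>V. f x = g (wm x)" using f(1) by blast
  qed
  have rec1: "\<And>e'. e' \<in> E' \<Longrightarrow> \<exists>e\<in>E. src e = \<tau> (src' e') \<and> tgt e = \<tau> (tgt' e') \<and> pmeq (\<alpha> e) (\<alpha>' e')"
    by (rule rec) (use \<tau>1 b\<tau> T1 in \<open>auto simp: bij_betw_def\<close>)
  have rec2: "\<And>e. e \<in> E \<Longrightarrow> \<exists>e'\<in>E'. src' e' = wm (src e) \<and> tgt' e' = wm (tgt e) \<and> pmeq (\<alpha>' e') (\<alpha> e)"
    by (rule S.rec) (use wm T2 in auto)
  have "gkm_iso V' E' src' tgt' \<alpha>' V E src tgt \<alpha> \<tau>"
    unfolding gkm_iso_def
  proof (intro conjI b\<tau> ballI impI)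
    fix p q assume pq: "p \<in> V'" "q \<in> V'" "p \<noteq> q"
    show "G.PP (\<tau> p) (\<tau> q) = H.PP p q \<or> G.PP (\<tau> p) (\<tau> q) = - H.PP p q"
      unfolding P_prod_def
    proof (rule match_prod)
      show "finite {e \<in> E. src e = \<tau> p \<and> tgt e = \<tau> q}" using G.finE by simp
      show "finite {e \<in> E'. src' e = p \<and> tgt' e = q}" using H.finE by simp
      fix y assume "y \<in> {e \<in> E'. src' e = p \<and> tgt' e = q}"
      then show "\<exists>x\<in>{e \<in> E. src e = \<tau> p \<and> tgt e = \<tau> q}. pmeq (\<alpha> x) (\<alpha>' y)"
        using rec1 by fastforce
    next
      fix x assume x: "x \<in> {e \<in> E. src e = \<tau> p \<and> tgt e = \<tau> q}"
      then obtain e' where "e' \<in> E'" "src' e' = wm (src x)" "tgt' e' = wm (tgt x)" "pmeq (\<alpha>' e') (\<alpha> x)"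
        using rec2 by blast
      then show "\<exists>y\<in>{e \<in> E'. src' e = p \<and> tgt' e = q}. pmeq (\<alpha>' y) (\<alpha> x)"
        using x \<tau>1 pq by auto
    next
      fix x1 x2 assume "x1 \<in> {e \<in> E. src e = \<tau> p \<and> tgt e = \<tau> q}" "x2 \<in> {e \<in> E. src e = \<tau> p \<and> tgt e = \<tau> q}" "x1 \<noteq> x2"
      then show "\<not> pmeq (\<alpha> x1) (\<alpha> x2)"
        using G.lab_pm[of x2 x1] by (auto simp: pmeq_def)
    next
      fix y1 y2 assume "y1 \<in> {e \<in> E'. src' e = p \<and> tgt' e = q}" "y2 \<in> {e \<in> E'. src' e = p \<and> tgt' e = q}" "y1 \<noteq> y2"
      then show "\<not> pmeq (\<alpha>' y1) (\<alpha>' y2)"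
        using H.lab_pm[of y2 y1] by (auto simp: pmeq_def)
    qed
  qed
  then show ?thesis by blast
qed

end

theorem theorem1p1:
  fixes V :: "'v set" and E :: "'e set" and src tgt :: "'e \<Rightarrow> 'v" and rv :: "'e \<Rightarrow> 'e"
    and \<alpha> :: "'e \<Rightarrow> ('r::finite \<Rightarrow> int)"
    and V' :: "'w set" and E' :: "'f set" and src' tgt' :: "'f \<Rightarrow> 'w" and rv' :: "'f \<Rightarrow> 'f"
    and \<alpha>' :: "'f \<Rightarrow> ('r \<Rightarrow> int)"
    and n n' :: nat
  assumes "gkm_graph n V E src tgt rv \<alpha>"
    and "gkm_graph n' V' E' src' tgt' rv' \<alpha>'"
  shows "(\<exists>\<Phi>. alg_iso V (gkm_cohom V E src tgt \<alpha>) V' (gkm_cohom V' E' src' tgt' \<alpha>') \<Phi>)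
     \<longleftrightarrow> (\<exists>\<phi>. gkm_iso V' E' src' tgt' \<alpha>' V E src tgt \<alpha> \<phi>)"
proof -
  interpret gkm2 n V E src tgt rv \<alpha> n' V' E' src' tgt' rv' \<alpha>'
    using assms by (simp add: gkm2_def gkm_def)
  show ?thesis using alg_to_iso iso_to_alg by blast
qed

end
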